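(* Let $\mathbf{F}$ be a finite field with $q$ elements, $n\ge1$, $V_j=\operatorname{span}(b_1,\dots,b_j)\subseteq\mathbf{F}^n$ for the standard basis, and $r\ge0$. Let $T\colon V_{n-1}\to V_{n-1}$ be a semi-idempotent linear map of rank $\le r$. For $f\colon\mathbf{Z}_{\ge0}\to\mathbf{Z}$ put \[ E_n(f,T)=\sum_{\substack{S\colon V_n\to V_n\ \text{semi-idempotent}\\ \operatorname{rank}S\le r,\ S|_{V_{n-1}}=T}}\mu(\mathrm{srk}\,S)\,f(\operatorname{rank}S), \] where $S|_{V_{n-1}}=T$ means $S(v)=T(v)$ for all $v\in V_{n-1}$. Then (1) if $\operatorname{rank}T\le r-1$, $E_n(f,T)=\mu(\mathrm{srk}\,T)\,q^{\operatorname{rank}T}\big(f(\operatorname{rank}T)-f(\operatorname{rank}T+1)\big)$; (2) if $\operatorname{rank}T=r$, $E_n(f,T)=\mu(\mathrm{srk}\,T)\,q^{\operatorname{rank}T}f(\operatorname{rank}T)$.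
   Context: A linear operator $S$ on a finite-dimensional space $V$ is semi-idempotent if $V=X\oplus Y$ with $X,Y$ $S$-stable, $S|_X=\mathrm{id}$ and $S|_Y$ nilpotent. $\mathrm{srk}$ is the stable rank: rank of the $j$-th power for $j\gg0$. $\mu(i)=(-1)^iq^{\binom i2}$. *)

theory Defs
  imports "Jordan_Normal_Form.DL_Rank"
begin

text \<open>Linear maps on F^d are represented by d x d matrices (standard basis),
  acting on column vectors of dimension d.\<close>

definition is_subspace :: "nat \<Rightarrow> 'a::field vec set \<Rightarrow> bool" where
  "is_subspace d X \<longleftrightarrow> X \<subseteq> carrier_vec d \<and> 0\<^sub>v d \<in> X \<and>
     (\<forall>x\<in>X. \<forall>y\<in>X. x + y \<in> X) \<and> (\<forall>c. \<forall>x\<in>X. c \<cdot>\<^sub>v x \<in> X)"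

definition semi_idempotent :: "nat \<Rightarrow> 'a::field mat \<Rightarrow> bool" where
  "semi_idempotent d S \<longleftrightarrow> S \<in> carrier_mat d d \<and>
     (\<exists>X Y. is_subspace d X \<and> is_subspace d Y \<and> X \<inter> Y = {0\<^sub>v d} \<and>
        (\<forall>v\<in>carrier_vec d. \<exists>x\<in>X. \<exists>y\<in>Y. v = x + y) \<and>
        (\<forall>x\<in>X. S *\<^sub>v x \<in> X) \<and> (\<forall>y\<in>Y. S *\<^sub>v y \<in> Y) \<and>
        (\<forall>x\<in>X. S *\<^sub>v x = x) \<and>
        (\<exists>k. \<forall>y\<in>Y. (S ^\<^sub>m k) *\<^sub>v y = 0\<^sub>v d))"

abbreviation mrank :: "nat \<Rightarrow> 'a::field mat \<Rightarrow> nat" where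
  "mrank d A \<equiv> vec_space.rank d A"

definition srk :: "nat \<Rightarrow> 'a::field mat \<Rightarrow> nat" where
  "srk d S = (THE s. \<exists>N. \<forall>j\<ge>N. mrank d (S ^\<^sub>m j) = s)"

definition mu :: "int \<Rightarrow> nat \<Rightarrow> int" where
  "mu q i = (-1) ^ i * q ^ (i choose 2)"

text \<open>Embedding of V_{n-1} = span(b_1..b_{n-1}) into F^n (last coordinate zero).\<close>
definition embed_vec :: "nat \<Rightarrow> 'a::zero vec \<Rightarrow> 'a vec" where
  "embed_vec n v = vec n (\<lambda>i. if i < n - 1 then v $ i else 0)"

definition restricts_to :: "nat \<Rightarrow> 'a::field mat \<Rightarrow> 'a mat \<Rightarrow> bool" where
  "restricts_to n S T \<longleftrightarrow>
     (\<forall>v\<in>carrier_vec (n - 1). S *\<^sub>v embed_vec n v = embed_vec n (T *\<^sub>v v))"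

definition E_sum :: "int \<Rightarrow> nat \<Rightarrow> nat \<Rightarrow> (nat \<Rightarrow> int) \<Rightarrow> 'a::field mat \<Rightarrow> int" where
  "E_sum q n r f T = (\<Sum>S\<in>{S \<in> carrier_mat n n. semi_idempotent n S \<and> mrank n S \<le> r
        \<and> restricts_to n S T}. mu q (srk n S) * f (mrank n S))"

end

theory Submission
  imports Defs
begin

context vec_space begin

lemma card_span_indpt:
  assumes fin: "finite (UNIV :: 'a set)" and U: "finite U" "U \<subseteq> carrier_vec n" and li: "lin_indpt U"
  shows "card (span U) = card (UNIV :: 'a set) ^ card U"
proof -
  have sp: "span U = (\<lambda>a. lincomb a U) ` (PiE U (\<lambda>_. UNIV))"
  proof -
    have "span U = {lincomb a U | a. a \<in> U \<rightarrow> UNIV}" using finite_span[OF U] by simp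
    also have "\<dots> = (\<lambda>a. lincomb a U) ` (PiE U (\<lambda>_. UNIV))"
    proof (auto simp: image_def)
      fix a show "\<exists>x\<in>U \<rightarrow>\<^sub>E UNIV. lincomb a U = lincomb x U"
        by (rule bexI[of _ "restrict a U"], rule lincomb_cong, auto simp: U)
    qed
    finally show ?thesis .
  qed
  have inj: "inj_on (\<lambda>a. lincomb a U) (PiE U (\<lambda>_. UNIV))"
  proof (rule inj_onI)
    fix a b assume a: "a \<in> PiE U (\<lambda>_. UNIV)" and b: "b \<in> PiE U (\<lambda>_. UNIV)"
      and eq: "lincomb a U = lincomb b U"
    have "lincomb (\<lambda>v. a v - b v) U = lincomb a U \<ominus>\<^bsub>V\<^esub> lincomb b U"
      using lincomb_diff[OF U, of a b] by simp
    also have "\<dots> = 0\<^sub>v n" unfolding eq using U lincomb_closed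
      using M.r_neg[of "lincomb b U"] unfolding a_minus_def by auto
    finally have z: "lincomb (\<lambda>v. a v - b v) U = 0\<^sub>v n" .
    have "\<forall>v\<in>U. a v - b v = 0"
    proof (rule ccontr)
      assume "\<not> ?thesis"
      then obtain v where "v \<in> U" "a v - b v \<noteq> 0" by auto
      then have "lin_dep U" unfolding lin_dep_def using z U
        by (intro exI[of _ U] exI[of _ "\<lambda>v. a v - b v"] exI[of _ v]) auto
      with li show False by simp
    qed
    then show "a = b" using a b by (intro ext) (metis PiE_E eq_iff_diff_eq_0)
  qed
  have "card (span U) = card (PiE U (\<lambda>_. UNIV :: 'a set))" unfolding sp using card_image[OF inj] .
  also have "\<dots> = card (UNIV :: 'a set) ^ card U" by (simp add: card_PiE U)
  finally show ?thesis .
qed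

lemma span_cols_eq:
  assumes A: "A \<in> carrier_mat n nc"
  shows "span (set (cols A)) = {A *\<^sub>v v | v. v \<in> carrier_vec nc}"
proof -
  have cs: "set (cols A) \<subseteq> carrier_vec n" using A cols_dim by blast
  have mc: "mat_of_cols n (cols A) = A" using A mat_of_cols_cols[of A] by auto
  have lc: "lincomb_list c (cols A) = A *\<^sub>v vec nc c" for c
    using lincomb_list_as_mat_mult[of "cols A" c] cs A mc by (auto simp: carrier_vecD subset_iff)
  have "span (set (cols A)) = span_list (cols A)" using span_list_as_span[OF cs] by simp
  also have "\<dots> = {A *\<^sub>v v | v. v \<in> carrier_vec nc}"
    unfolding span_list_def lc
  proof (auto)
    fix v :: "'a vec" assume "v \<in> carrier_vec nc"
    then show "\<exists>c. A *\<^sub>v v = A *\<^sub>v vec nc c"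
      by (intro exI[of _ "\<lambda>i. v $ i"]) (metis carrier_vecD eq_vecI dim_vec index_vec)
  qed
  finally show ?thesis .
qed

lemma card_colsp:
  assumes fin: "finite (UNIV :: 'a set)" and A: "A \<in> carrier_mat n nc"
  shows "card {A *\<^sub>v v | v. v \<in> carrier_vec nc} = card (UNIV :: 'a set) ^ rank A"
proof -
  have cs: "set (cols A) \<subseteq> carrier_vec n" using A cols_dim by blast
  have li0: "lin_indpt {}" unfolding lin_dep_def by auto
  obtain U where U: "finite U" "maximal U (\<lambda>T. T \<subseteq> set (cols A) \<and> lin_indpt T)"
    using maximal_exists_superset[of "set (cols A)" "(\<lambda>T. T \<subseteq> set (cols A) \<and> lin_indpt T)" "{}"] li0
    by auto
  have rk: "rank A = card U" using rank_card_indpt[OF A U(2)] .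
  have "lin_indpt U" "U \<subseteq> set (cols A)" using U(2) unfolding maximal_def by auto
  have Uc: "U \<subseteq> carrier_vec n" using \<open>U \<subseteq> set (cols A)\<close> cs by auto
  have "span U = span (set (cols A))"
  proof (rule ccontr)
    let ?S = "set (cols A)"
    assume "span U \<noteq> span ?S"
    have "span U \<subseteq> span ?S" using span_is_monotone \<open>U\<subseteq>?S\<close> by metis
    then have "\<not> ?S \<subseteq> span U" by (meson \<open>U \<subseteq> ?S\<close> \<open>span U \<noteq> span ?S\<close> cs span_is_submodule
      span_is_subset subset_antisym subset_trans)
    then obtain s where "s\<in>?S" "s \<notin> span U" by blast
    then have "lin_indpt (U\<union>{s})" using lindep_span
      by (meson \<open>U \<subseteq> ?S\<close> \<open>lin_indpt U\<close> cs lin_dep_iff_in_span rev_subsetD span_mem subset_trans)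
    have "s\<notin>U" using \<open>U \<subseteq> ?S\<close> \<open>s \<notin> span U\<close> cs span_mem by auto
    then have "(U\<union>{s}) \<subseteq> ?S \<and> lin_indpt (U\<union>{s})" using \<open>U \<subseteq> ?S\<close> \<open>lin_indpt (U \<union> {s})\<close> \<open>s \<in> ?S\<close> by auto
    then have "\<not>maximal U (\<lambda>T. T \<subseteq> ?S \<and> lin_indpt T)"
      unfolding maximal_def using Un_subset_iff \<open>s \<notin> U\<close> insert_subset  order_refl by auto
    then show False using U by metis
  qed
  then have "{A *\<^sub>v v | v. v \<in> carrier_vec nc} = span U" using span_cols_eq[OF A] by simp
  then show ?thesis using card_span_indpt[OF fin U(1) Uc \<open>lin_indpt U\<close>] rk by simp
qed

end

definition colsp :: "'a::field mat \<Rightarrow> nat \<Rightarrow> 'a vec set" where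
  "colsp A m = {A *\<^sub>v v | v. v \<in> carrier_vec m}"

lemma card_colsp_rank:
  fixes A :: "'a::{field,finite} mat"
  assumes "A \<in> carrier_mat d m"
  shows "card (colsp A m) = card (UNIV :: 'a set) ^ mrank d A"
  using vec_space.card_colsp[OF _ assms] unfolding colsp_def by simp

lemma colsp_carrier: "A \<in> carrier_mat d m \<Longrightarrow> colsp A m \<subseteq> carrier_vec d"
  unfolding colsp_def by auto

lemma colsp_add: assumes A: "A \<in> carrier_mat d m" and x: "x \<in> colsp A m" and y: "y \<in> colsp A m"
  shows "x + y \<in> colsp A m"
proof -
  obtain u v where u: "u \<in> carrier_vec m" "x = A *\<^sub>v u" and v: "v \<in> carrier_vec m" "y = A *\<^sub>v v"
    using x y unfolding colsp_def by auto
  have "x + y = A *\<^sub>v (u + v)" using mult_add_distrib_mat_vec[OF A u(1) v(1)] u v by simp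
  then show ?thesis unfolding colsp_def using u v by auto
qed

lemma colsp_smult: assumes A: "A \<in> carrier_mat d m" and x: "x \<in> colsp A m"
  shows "b \<cdot>\<^sub>v x \<in> colsp A m"
proof -
  obtain u where u: "u \<in> carrier_vec m" "x = A *\<^sub>v u"
    using x unfolding colsp_def by auto
  have "b \<cdot>\<^sub>v x = A *\<^sub>v (b \<cdot>\<^sub>v u)" using mult_mat_vec[OF A u(1)] u by simp
  then show ?thesis unfolding colsp_def using u by auto
qed

lemma colsp_zero: assumes A: "A \<in> carrier_mat d m" shows "0\<^sub>v d \<in> colsp A m"
proof -
  have "A *\<^sub>v 0\<^sub>v m = 0\<^sub>v d" using A by (intro eq_vecI) (auto simp: scalar_prod_def)
  then show ?thesis unfolding colsp_def by (intro CollectI exI[of _ "0\<^sub>v m"]) auto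
qed

lemma carrier_vec_PiE: "carrier_vec n = (\<lambda>f. vec n f) ` ({0..<n} \<rightarrow>\<^sub>E (UNIV :: 'b set))"
proof
  show "carrier_vec n \<subseteq> (\<lambda>f. vec n f) ` ({0..<n} \<rightarrow>\<^sub>E (UNIV :: 'b set))"
  proof
    fix v :: "'b vec" assume v: "v \<in> carrier_vec n"
    have "v = vec n (restrict (\<lambda>i. v $ i) {0..<n})" by (rule eq_vecI) (use v in auto)
    moreover have "restrict (\<lambda>i. v $ i) {0..<n} \<in> {0..<n} \<rightarrow>\<^sub>E (UNIV :: 'b set)" by simp
    ultimately show "v \<in> (\<lambda>f. vec n f) ` ({0..<n} \<rightarrow>\<^sub>E UNIV)" by (rule image_eqI)
  qed
  show "(\<lambda>f. vec n f) ` ({0..<n} \<rightarrow>\<^sub>E (UNIV :: 'b set)) \<subseteq> carrier_vec n"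
    by (rule image_subsetI) simp
qed

lemma card_carrier_vec': "card (carrier_vec n:: 'b::finite vec set) = card (UNIV :: 'b set) ^ n"
proof -
  have inj: "inj_on (\<lambda>f. vec n f) ({0..<n} \<rightarrow>\<^sub>E (UNIV :: 'b set))"
  proof (rule inj_onI)
    fix f g :: "nat \<Rightarrow> 'b" assume f: "f \<in> {0..<n} \<rightarrow>\<^sub>E UNIV" and g: "g \<in> {0..<n} \<rightarrow>\<^sub>E UNIV"
      and eq: "vec n f = vec n g"
    show "f = g"
    proof
      fix i show "f i = g i"
      proof (cases "i < n")
        case True
        have "vec n f $ i = vec n g $ i" using eq by (rule arg_cong)
        then show ?thesis using True by (simp only: index_vec)
      next
        case False
        then have ni: "i \<notin> {0..<n}" by simp
        show ?thesis using PiE_arb[OF f ni] PiE_arb[OF g ni] by (rule trans[OF _ sym])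
      qed
    qed
  qed
  have "card (carrier_vec n :: 'b vec set) = card ({0..<n} \<rightarrow>\<^sub>E (UNIV :: 'b set))"
    unfolding carrier_vec_PiE using card_image[OF inj] .
  also have "\<dots> = card (UNIV :: 'b set) ^ n" by (simp add: card_PiE)
  finally show ?thesis .
qed

lemma finite_carrier_vec'[simp]: "finite (carrier_vec n:: 'b::finite vec set)"
proof -
  have "carrier_vec n \<subseteq> (\<lambda>f. vec n f) ` ({0..<n} \<rightarrow>\<^sub>E (UNIV :: 'b set))"
  proof
    fix v :: "'b vec" assume v: "v \<in> carrier_vec n"
    have "v = vec n (restrict (\<lambda>i. v $ i) {0..<n})" by (rule eq_vecI) (use v in auto)
    moreover have "restrict (\<lambda>i. v $ i) {0..<n} \<in> {0..<n} \<rightarrow>\<^sub>E (UNIV :: 'b set)" by simp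
    ultimately show "v \<in> (\<lambda>f. vec n f) ` ({0..<n} \<rightarrow>\<^sub>E UNIV)" by (rule image_eqI)
  qed
  moreover have "finite ({0..<n} \<rightarrow>\<^sub>E (UNIV :: 'b set))" by (simp add: finite_PiE)
  ultimately show ?thesis using finite_subset by blast
qed
lemma mat_unit_entry: fixes A :: "'a::semiring_1 mat" shows "A \<in> carrier_mat r m \<Longrightarrow> i < r \<Longrightarrow> j < m \<Longrightarrow> (A *\<^sub>v unit_vec m j) $ i = A $$ (i,j)"
  by (auto simp: carrier_matD)

lemma mat_eq_vecI: fixes A B :: "'a::semiring_1 mat" assumes A: "A \<in> carrier_mat r m" and B: "B \<in> carrier_mat r m"
  and eq: "\<And>v. v \<in> carrier_vec m \<Longrightarrow> A *\<^sub>v v = B *\<^sub>v v"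
  shows "A = B"
proof (rule eq_matI)
  fix i j assume "i < dim_row B" "j < dim_col B"
  then have ij: "i < r" "j < m" using B by auto
  have "A $$ (i,j) = (A *\<^sub>v unit_vec m j) $ i" using A ij by simp
  also have "\<dots> = (B *\<^sub>v unit_vec m j) $ i" using eq[of "unit_vec m j"] by simp
  also have "\<dots> = B $$ (i,j)" using B ij by simp
  finally show "A $$ (i,j) = B $$ (i,j)" .
qed (use A B in auto)

lemma pow_mat_add: assumes "A \<in> carrier_mat m m" shows "A ^\<^sub>m (i + j) = A ^\<^sub>m i * A ^\<^sub>m j"
proof (induct j)
  case 0 then show ?case using assms by simp
next
  case (Suc j)
  have "A ^\<^sub>m (i + Suc j) = A ^\<^sub>m (i + j) * A" by simp
  also have "\<dots> = A ^\<^sub>m i * A ^\<^sub>m j * A" using Suc by simp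
  also have "\<dots> = A ^\<^sub>m i * (A ^\<^sub>m j * A)" using assms by (intro assoc_mult_mat) auto
  finally show ?case by simp
qed

lemma pow_mat_Suc_left: assumes "A \<in> carrier_mat m m" shows "A ^\<^sub>m (Suc j) = A * A ^\<^sub>m j"
  using pow_mat_add[OF assms, of 1 j] assms by simp

lemma pow_vec_Suc: assumes "A \<in> carrier_mat m m" "v \<in> carrier_vec m"
  shows "(A ^\<^sub>m (Suc j)) *\<^sub>v v = (A ^\<^sub>m j) *\<^sub>v (A *\<^sub>v v)"
proof -
  have "(A ^\<^sub>m j * A) *\<^sub>v v = (A ^\<^sub>m j) *\<^sub>v (A *\<^sub>v v)"
    by (rule assoc_mult_mat_vec) (use assms in auto)
  then show ?thesis by (simp only: pow_mat.simps)
qed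

lemma pow_vec_Suc_left: assumes "A \<in> carrier_mat m m" "v \<in> carrier_vec m"
  shows "(A ^\<^sub>m (Suc j)) *\<^sub>v v = A *\<^sub>v ((A ^\<^sub>m j) *\<^sub>v v)"
proof -
  have "(A * A ^\<^sub>m j) *\<^sub>v v = A *\<^sub>v ((A ^\<^sub>m j) *\<^sub>v v)"
    by (rule assoc_mult_mat_vec) (use assms in auto)
  then show ?thesis by (simp only: pow_mat_Suc_left[OF assms(1)])
qed

lemma semi_idem_iff:
  fixes S :: "'a::field mat"
  assumes S: "S \<in> carrier_mat m m"
  shows "semi_idempotent m S \<longleftrightarrow> (\<exists>k. S ^\<^sub>m Suc k = S ^\<^sub>m k)"
proof
  assume "semi_idempotent m S"
  then obtain X Y k where sub: "is_subspace m X" "is_subspace m Y"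
    and dec: "\<forall>v\<in>carrier_vec m. \<exists>x\<in>X. \<exists>y\<in>Y. v = x + y"
    and sY: "\<forall>y\<in>Y. S *\<^sub>v y \<in> Y" and idX: "\<forall>x\<in>X. S *\<^sub>v x = x"
    and nil: "\<forall>y\<in>Y. (S ^\<^sub>m k) *\<^sub>v y = 0\<^sub>v m"
    unfolding semi_idempotent_def by blast
  have Xc: "X \<subseteq> carrier_vec m" and Yc: "Y \<subseteq> carrier_vec m" using sub unfolding is_subspace_def by auto
  have powX: "(S ^\<^sub>m j) *\<^sub>v x = x" if "x \<in> X" for x j
  proof (induct j)
    case 0 then show ?case using that Xc S by auto
  next
    case (Suc j) then show ?case using that Xc S idX by (subst pow_vec_Suc) auto
  qed
  have "S ^\<^sub>m Suc k = S ^\<^sub>m k"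
  proof (rule mat_eq_vecI[of _ m m])
    fix v :: "'a vec" assume v: "v \<in> carrier_vec m"
    then obtain x y where xy: "x \<in> X" "y \<in> Y" "v = x + y" using dec by blast
    have xc: "x \<in> carrier_vec m" and yc: "y \<in> carrier_vec m" using xy Xc Yc by auto
    have 1: "(S ^\<^sub>m Suc k) *\<^sub>v v = (S ^\<^sub>m Suc k) *\<^sub>v x + (S ^\<^sub>m Suc k) *\<^sub>v y"
      unfolding xy(3) by (rule mult_add_distrib_mat_vec[OF pow_carrier_mat[OF S] xc yc])
    have 2: "(S ^\<^sub>m Suc k) *\<^sub>v y = 0\<^sub>v m"
      unfolding pow_vec_Suc[OF S yc, of k] using nil sY xy by simp
    have 3: "(S ^\<^sub>m Suc k) *\<^sub>v x = x" by (rule powX[OF xy(1)])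
    have 4: "(S ^\<^sub>m k) *\<^sub>v v = (S ^\<^sub>m k) *\<^sub>v x + (S ^\<^sub>m k) *\<^sub>v y"
      unfolding xy(3) by (rule mult_add_distrib_mat_vec[OF pow_carrier_mat[OF S] xc yc])
    have 5: "(S ^\<^sub>m k) *\<^sub>v x = x" by (rule powX[OF xy(1)])
    have 6: "(S ^\<^sub>m k) *\<^sub>v y = 0\<^sub>v m" using nil xy by simp
    have "(S ^\<^sub>m Suc k) *\<^sub>v v = x + 0\<^sub>v m" unfolding 1 2 3 ..
    moreover have "(S ^\<^sub>m k) *\<^sub>v v = x + 0\<^sub>v m" unfolding 4 5 6 ..
    ultimately show "(S ^\<^sub>m Suc k) *\<^sub>v v = (S ^\<^sub>m k) *\<^sub>v v" using xc by simp
  qed (use S in auto)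
  then show "\<exists>k. S ^\<^sub>m Suc k = S ^\<^sub>m k" by blast
next
  assume "\<exists>k. S ^\<^sub>m Suc k = S ^\<^sub>m k"
  then obtain k where k: "S ^\<^sub>m Suc k = S ^\<^sub>m k" by blast
  let ?P = "S ^\<^sub>m k"
  have Pc: "?P \<in> carrier_mat m m" using S by simp
  have stab: "S ^\<^sub>m (k + j) = ?P" for j
  proof (induct j)
    case (Suc j)
    have "S ^\<^sub>m (k + Suc j) = S ^\<^sub>m (k + j) * S" by simp
    also have "\<dots> = ?P" using Suc k by simp
    finally show ?case .
  qed simp
  have PP: "?P * ?P = ?P" using pow_mat_add[OF S, of k k] stab[of k] by simp
  have SP: "S * ?P = ?P" using pow_mat_Suc_left[OF S, of k] k by simp
  define X where "X = {v \<in> carrier_vec m. S *\<^sub>v v = v}"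
  define Y where "Y = {v \<in> carrier_vec m. ?P *\<^sub>v v = 0\<^sub>v m}"
  have z: "A *\<^sub>v 0\<^sub>v m = 0\<^sub>v m" if "A \<in> carrier_mat m m" for A :: "'a mat"
    using that by (intro eq_vecI) (auto simp: scalar_prod_def)
  have subX: "is_subspace m X" unfolding is_subspace_def X_def
    using S z by (auto simp: mult_add_distrib_mat_vec mult_mat_vec)
  have subY: "is_subspace m Y" unfolding is_subspace_def Y_def
    using Pc z by (auto simp: mult_add_distrib_mat_vec mult_mat_vec)
  have PX: "?P *\<^sub>v v = v" if "v \<in> X" for v
  proof -
    have "(S ^\<^sub>m j) *\<^sub>v v = v" for j
    proof (induct j)
      case (Suc j)
      have vc: "v \<in> carrier_vec m" and Sv: "S *\<^sub>v v = v" using that unfolding X_def by auto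
      show ?case unfolding pow_vec_Suc[OF S vc] Sv by (rule Suc)
    qed (use that S in \<open>auto simp: X_def\<close>)
    then show ?thesis by blast
  qed
  have f3: "X \<inter> Y = {0\<^sub>v m}"
  proof
    show "X \<inter> Y \<subseteq> {0\<^sub>v m}" using PX unfolding Y_def by fastforce
    show "{0\<^sub>v m} \<subseteq> X \<inter> Y" using subX subY unfolding is_subspace_def by auto
  qed
  have f4: "\<forall>v\<in>carrier_vec m. \<exists>x\<in>X. \<exists>y\<in>Y. v = x + y"
  proof
    fix v :: "'a vec" assume v: "v \<in> carrier_vec m"
    let ?x = "?P *\<^sub>v v" and ?y = "v - ?P *\<^sub>v v"
    have "S *\<^sub>v ?x = (S * ?P) *\<^sub>v v" using assoc_mult_mat_vec[OF S Pc v] by simp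
    then have xX: "?x \<in> X" unfolding X_def using v Pc SP by simp
    have "?P *\<^sub>v ?y = ?P *\<^sub>v v - ?P *\<^sub>v ?x"
      by (rule mult_minus_distrib_mat_vec[OF Pc v]) (use Pc v in simp)
    also have "?P *\<^sub>v ?x = (?P * ?P) *\<^sub>v v" using assoc_mult_mat_vec[OF Pc Pc v] by simp
    finally have yY: "?y \<in> Y" unfolding Y_def using v Pc PP by simp
    have xc: "?x \<in> carrier_vec m" using Pc v by simp
    have "v = ?x + ?y" by (rule eq_vecI) (use v xc S in auto)
    then show "\<exists>x\<in>X. \<exists>y\<in>Y. v = x + y" using xX yY by blast
  qed
  have f5: "\<forall>x\<in>X. S *\<^sub>v x \<in> X" and f7: "\<forall>x\<in>X. S *\<^sub>v x = x" unfolding X_def by auto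
  have f6: "\<forall>y\<in>Y. S *\<^sub>v y \<in> Y"
  proof
    fix y assume y: "y \<in> Y"
    then have yc: "y \<in> carrier_vec m" unfolding Y_def by auto
    have "?P *\<^sub>v (S *\<^sub>v y) = (?P * S) *\<^sub>v y" using assoc_mult_mat_vec[OF Pc S yc] by simp
    also have "?P * S = S * ?P" using k SP by simp
    also have "(S * ?P) *\<^sub>v y = S *\<^sub>v (?P *\<^sub>v y)" using assoc_mult_mat_vec[OF S Pc yc] by simp
    also have "\<dots> = 0\<^sub>v m" using y z[OF S] unfolding Y_def by simp
    finally show "S *\<^sub>v y \<in> Y" unfolding Y_def using S yc by simp
  qed
  have f8: "\<forall>y\<in>Y. (S ^\<^sub>m k) *\<^sub>v y = 0\<^sub>v m" unfolding Y_def by simp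
  have "semi_idempotent m S" unfolding semi_idempotent_def
    using S subX subY f3 f4 f5 f6 f7 f8 by blast
  then show "semi_idempotent m S" .
qed

lemma emb_carrier[simp]: "embed_vec (Suc d) u \<in> carrier_vec (Suc d)"
  unfolding embed_vec_def by simp

lemma emb_dim[simp]: "dim_vec (embed_vec (Suc d) u) = Suc d"
  unfolding embed_vec_def by simp

lemma emb_index[simp]: "i < Suc d \<Longrightarrow> embed_vec (Suc d) u $ i = (if i < d then u $ i else 0)"
  unfolding embed_vec_def by simp

lemma emb_add: "u \<in> carrier_vec d \<Longrightarrow> w \<in> carrier_vec d \<Longrightarrow>
  embed_vec (Suc d) (u + w) = embed_vec (Suc d) u + embed_vec (Suc d) (w :: 'a::monoid_add vec)"
  by (rule eq_vecI) auto

lemma emb_smult: "u \<in> carrier_vec d \<Longrightarrow>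
  embed_vec (Suc d) (b \<cdot>\<^sub>v u) = b \<cdot>\<^sub>v embed_vec (Suc d) (u :: 'a::semiring_0 vec)"
  by (rule eq_vecI) auto

lemma decomp_vec:
  fixes v :: "'a::semiring_1 vec"
  assumes v: "v \<in> carrier_vec (Suc d)"
  shows "v = embed_vec (Suc d) (vec d (\<lambda>i. v $ i)) + v $ d \<cdot>\<^sub>v unit_vec (Suc d) d"
  by (rule eq_vecI) (use v in \<open>auto simp: less_Suc_eq\<close>)

lemma emb_e_index:
  fixes x :: "'a::semiring_1 vec"
  assumes "i < Suc d"
  shows "(embed_vec (Suc d) x + \<beta> \<cdot>\<^sub>v unit_vec (Suc d) d) $ i = (if i < d then x $ i else \<beta>)"
  using assms by (auto simp: less_Suc_eq)

lemma emb_e_inj: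
  fixes x y :: "'a::semiring_1 vec"
  assumes x: "x \<in> carrier_vec d" and y: "y \<in> carrier_vec d"
    and eq: "embed_vec (Suc d) x + \<beta> \<cdot>\<^sub>v unit_vec (Suc d) d = embed_vec (Suc d) y + \<gamma> \<cdot>\<^sub>v unit_vec (Suc d) d"
  shows "x = y \<and> \<beta> = \<gamma>"
proof
  have "(embed_vec (Suc d) x + \<beta> \<cdot>\<^sub>v unit_vec (Suc d) d) $ d = (embed_vec (Suc d) y + \<gamma> \<cdot>\<^sub>v unit_vec (Suc d) d) $ d"
    using eq by (rule arg_cong)
  then show "\<beta> = \<gamma>" by (simp only: emb_e_index[of d d]) simp
  show "x = y"
  proof (rule eq_vecI)
    fix i assume "i < dim_vec y"
    then have i: "i < d" using y by simp
    have "(embed_vec (Suc d) x + \<beta> \<cdot>\<^sub>v unit_vec (Suc d) d) $ i = (embed_vec (Suc d) y + \<gamma> \<cdot>\<^sub>v unit_vec (Suc d) d) $ i"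
      using eq by (rule arg_cong)
    then show "x $ i = y $ i" using i by (simp only: emb_e_index[of i d]) simp
  qed (use x y in simp)
qed

lemma emb_inj:
  fixes x y :: "'a::semiring_1 vec"
  assumes x: "x \<in> carrier_vec d" and y: "y \<in> carrier_vec d"
    and eq: "embed_vec (Suc d) x = embed_vec (Suc d) y"
  shows "x = y"
proof -
  have "embed_vec (Suc d) x + 0 \<cdot>\<^sub>v unit_vec (Suc d) d = embed_vec (Suc d) y + 0 \<cdot>\<^sub>v unit_vec (Suc d) d"
    using eq by simp
  then show ?thesis using emb_e_inj[OF x y] by blast
qed

lemma block_mult:
  fixes M A :: "'a::field mat"
  assumes M: "M \<in> carrier_mat (Suc d) (Suc d)" and A: "A \<in> carrier_mat d d" and z: "z \<in> carrier_vec d"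
    and hE: "\<And>u. u \<in> carrier_vec d \<Longrightarrow> M *\<^sub>v embed_vec (Suc d) u = embed_vec (Suc d) (A *\<^sub>v u)"
    and he: "M *\<^sub>v unit_vec (Suc d) d = embed_vec (Suc d) z + \<beta> \<cdot>\<^sub>v unit_vec (Suc d) d"
    and u: "u \<in> carrier_vec d"
  shows "M *\<^sub>v (embed_vec (Suc d) u + b \<cdot>\<^sub>v unit_vec (Suc d) d)
     = embed_vec (Suc d) (A *\<^sub>v u + b \<cdot>\<^sub>v z) + (b * \<beta>) \<cdot>\<^sub>v unit_vec (Suc d) d"
proof -
  have "M *\<^sub>v (embed_vec (Suc d) u + b \<cdot>\<^sub>v unit_vec (Suc d) d)
     = M *\<^sub>v embed_vec (Suc d) u + M *\<^sub>v (b \<cdot>\<^sub>v unit_vec (Suc d) d)"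
    by (rule mult_add_distrib_mat_vec[OF M]) auto
  also have "M *\<^sub>v (b \<cdot>\<^sub>v unit_vec (Suc d) d) = b \<cdot>\<^sub>v (M *\<^sub>v unit_vec (Suc d) d)"
    by (rule mult_mat_vec[OF M]) simp
  also note hE[OF u]
  also note he
  finally have eq: "M *\<^sub>v (embed_vec (Suc d) u + b \<cdot>\<^sub>v unit_vec (Suc d) d) =
     embed_vec (Suc d) (A *\<^sub>v u) + b \<cdot>\<^sub>v (embed_vec (Suc d) z + \<beta> \<cdot>\<^sub>v unit_vec (Suc d) d)" .
  have Au: "A *\<^sub>v u \<in> carrier_vec d" using A u by simp
  show ?thesis unfolding eq
    by (rule eq_vecI) (use Au z in \<open>auto simp: less_Suc_eq algebra_simps\<close>)
qed

lemma block_colsp: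
  fixes M A :: "'a::field mat"
  assumes M: "M \<in> carrier_mat (Suc d) (Suc d)" and A: "A \<in> carrier_mat d d" and z: "z \<in> carrier_vec d"
    and hE: "\<And>u. u \<in> carrier_vec d \<Longrightarrow> M *\<^sub>v embed_vec (Suc d) u = embed_vec (Suc d) (A *\<^sub>v u)"
    and he: "M *\<^sub>v unit_vec (Suc d) d = embed_vec (Suc d) z + \<beta> \<cdot>\<^sub>v unit_vec (Suc d) d"
  shows "colsp M (Suc d) = {embed_vec (Suc d) (w + b \<cdot>\<^sub>v z) + (b * \<beta>) \<cdot>\<^sub>v unit_vec (Suc d) d | w b. w \<in> colsp A d}"
proof (rule equalityI; rule subsetI)
    fix x
    assume "x \<in> colsp M (Suc d)"
    then obtain v where v: "v \<in> carrier_vec (Suc d)" "x = M *\<^sub>v v" unfolding colsp_def by auto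
    let ?u = "vec d (\<lambda>i. v $ i)"
    have u: "?u \<in> carrier_vec d" by simp
    have "x = embed_vec (Suc d) (A *\<^sub>v ?u + v $ d \<cdot>\<^sub>v z) + (v $ d * \<beta>) \<cdot>\<^sub>v unit_vec (Suc d) d"
      unfolding v(2) by (subst decomp_vec[OF v(1)], rule block_mult[OF M A z hE he u])
    moreover have "A *\<^sub>v ?u \<in> colsp A d" unfolding colsp_def using u by blast
    ultimately show "x \<in> {embed_vec (Suc d) (w + b \<cdot>\<^sub>v z) + (b * \<beta>) \<cdot>\<^sub>v unit_vec (Suc d) d | w b. w \<in> colsp A d}"
      by blast
  next
    fix x
    assume "x \<in> {embed_vec (Suc d) (w + b \<cdot>\<^sub>v z) + (b * \<beta>) \<cdot>\<^sub>v unit_vec (Suc d) d | w b. w \<in> colsp A d}"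
    then obtain w b where wb: "w \<in> colsp A d" "x = embed_vec (Suc d) (w + b \<cdot>\<^sub>v z) + (b * \<beta>) \<cdot>\<^sub>v unit_vec (Suc d) d"
      by blast
    then obtain u where u: "u \<in> carrier_vec d" "w = A *\<^sub>v u" unfolding colsp_def by blast
    have "x = M *\<^sub>v (embed_vec (Suc d) u + b \<cdot>\<^sub>v unit_vec (Suc d) d)"
      unfolding wb(2) u(2) by (rule block_mult[OF M A z hE he u(1), symmetric])
    moreover have "embed_vec (Suc d) u + b \<cdot>\<^sub>v unit_vec (Suc d) d \<in> carrier_vec (Suc d)" by simp
    ultimately show "x \<in> colsp M (Suc d)" unfolding colsp_def by blast
qed

lemma card_UNIV_ge2: "card (UNIV :: 'a::{field,finite} set) \<ge> 2"
proof -
  have "card {0::'a, 1} = 2" by simp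
  moreover have "card {0::'a, 1} \<le> card (UNIV :: 'a set)" by (rule card_mono) auto
  ultimately show ?thesis by simp
qed

lemma rank_from_card:
  fixes M :: "'a::{field,finite} mat"
  assumes M: "M \<in> carrier_mat m m'" and c: "card (colsp M m') = card (UNIV :: 'a set) ^ x"
  shows "mrank m M = x"
proof -
  have "card (UNIV :: 'a set) ^ mrank m M = card (UNIV :: 'a set) ^ x"
    using card_colsp_rank[OF M] c by simp
  then show ?thesis using card_UNIV_ge2[where 'a='a] by (simp add: power_inject_exp)
qed

lemma srk_eq:
  assumes "\<And>j. j \<ge> N \<Longrightarrow> mrank m (S ^\<^sub>m j) = s"
  shows "srk m S = s"
  unfolding srk_def
proof (rule the_equality)
  show "\<exists>N. \<forall>j\<ge>N. mrank m (S ^\<^sub>m j) = s" using assms by blast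
next
  fix s' assume "\<exists>N. \<forall>j\<ge>N. mrank m (S ^\<^sub>m j) = s'"
  then obtain N' where N': "\<forall>j\<ge>N'. mrank m (S ^\<^sub>m j) = s'" by blast
  have "mrank m (S ^\<^sub>m (max N N')) = s'" using N' by simp
  moreover have "mrank m (S ^\<^sub>m (max N N')) = s" using assms by simp
  ultimately show "s' = s" by simp
qed

lemma cnt_inj:
  fixes W :: "'a::{field,finite} vec set"
  assumes W: "W \<subseteq> carrier_vec d" and z: "z \<in> carrier_vec d"
    and inj: "inj_on (\<lambda>(w,b). embed_vec (Suc d) (w + b \<cdot>\<^sub>v z) + (b * \<beta>) \<cdot>\<^sub>v unit_vec (Suc d) d) (W \<times> UNIV)"
  shows "card {embed_vec (Suc d) (w + b \<cdot>\<^sub>v z) + (b * \<beta>) \<cdot>\<^sub>v unit_vec (Suc d) d | w b. w \<in> W}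
    = card W * card (UNIV :: 'a set)"
proof -
  have "{embed_vec (Suc d) (w + b \<cdot>\<^sub>v z) + (b * \<beta>) \<cdot>\<^sub>v unit_vec (Suc d) d | w b. w \<in> W}
    = (\<lambda>(w,b). embed_vec (Suc d) (w + b \<cdot>\<^sub>v z) + (b * \<beta>) \<cdot>\<^sub>v unit_vec (Suc d) d) ` (W \<times> UNIV)"
    by auto
  then show ?thesis using card_image[OF inj] by (simp add: card_cartesian_product)
qed

lemma cnt_beta:
  fixes W :: "'a::{field,finite} vec set"
  assumes W: "W \<subseteq> carrier_vec d" and z: "z \<in> carrier_vec d" and \<beta>: "\<beta> \<noteq> 0"
  shows "card {embed_vec (Suc d) (w + b \<cdot>\<^sub>v z) + (b * \<beta>) \<cdot>\<^sub>v unit_vec (Suc d) d | w b. w \<in> W}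
    = card W * card (UNIV :: 'a set)"
proof (rule cnt_inj[OF W z], rule inj_onI, clarify)
  fix w b w' b' assume w: "w \<in> W" and w': "w' \<in> W"
    and eq: "embed_vec (Suc d) (w + b \<cdot>\<^sub>v z) + (b * \<beta>) \<cdot>\<^sub>v unit_vec (Suc d) d =
       embed_vec (Suc d) (w' + b' \<cdot>\<^sub>v z) + (b' * \<beta>) \<cdot>\<^sub>v unit_vec (Suc d) d"
  have wc: "w \<in> carrier_vec d" "w' \<in> carrier_vec d" using w w' W by auto
  have "w + b \<cdot>\<^sub>v z = w' + b' \<cdot>\<^sub>v z \<and> b * \<beta> = b' * \<beta>"
    by (rule emb_e_inj[OF _ _ eq]) (use wc z in auto)
  then have e1: "w + b \<cdot>\<^sub>v z = w' + b' \<cdot>\<^sub>v z" and bb: "b = b'" using \<beta> by auto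
  have "w = w'"
  proof (rule eq_vecI)
    fix i assume "i < dim_vec w'"
    then have i: "i < d" using wc by simp
    have "(w + b \<cdot>\<^sub>v z) $ i = (w' + b' \<cdot>\<^sub>v z) $ i" using e1 by (rule arg_cong)
    then show "w $ i = w' $ i" using i wc z bb by simp
  qed (use wc in simp)
  then show "w = w' \<and> b = b'" using bb by simp
qed

lemma cnt_zero_in:
  fixes W :: "'a::{field,finite} vec set"
  assumes W: "W \<subseteq> carrier_vec d" and z: "z \<in> W"
    and add: "\<And>x y. x \<in> W \<Longrightarrow> y \<in> W \<Longrightarrow> x + y \<in> W"
    and sm: "\<And>x b. x \<in> W \<Longrightarrow> b \<cdot>\<^sub>v x \<in> W"
  shows "card {embed_vec (Suc d) (w + b \<cdot>\<^sub>v z) + (b * 0) \<cdot>\<^sub>v unit_vec (Suc d) d | w b. w \<in> W}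
    = card W"
proof -
  have zc: "z \<in> carrier_vec d" using z W by auto
  have "{embed_vec (Suc d) (w + b \<cdot>\<^sub>v z) + (b * 0) \<cdot>\<^sub>v unit_vec (Suc d) d | w b. w \<in> W}
      = embed_vec (Suc d) ` W"
  proof (rule equalityI; rule subsetI)
    fix x assume "x \<in> {embed_vec (Suc d) (w + b \<cdot>\<^sub>v z) + (b * 0) \<cdot>\<^sub>v unit_vec (Suc d) d | w b. w \<in> W}"
    then obtain w b where w: "w \<in> W" and x: "x = embed_vec (Suc d) (w + b \<cdot>\<^sub>v z) + (b * 0) \<cdot>\<^sub>v unit_vec (Suc d) d"
      by blast
    have "x = embed_vec (Suc d) (w + b \<cdot>\<^sub>v z)" unfolding x by (rule eq_vecI) auto
    moreover have "w + b \<cdot>\<^sub>v z \<in> W" using add[OF w sm[OF z]] .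
    ultimately show "x \<in> embed_vec (Suc d) ` W" by blast
  next
    fix x assume "x \<in> embed_vec (Suc d) ` W"
    then obtain w where w: "w \<in> W" and x: "x = embed_vec (Suc d) w" by blast
    have wc: "w \<in> carrier_vec d" using w W by auto
    have "x = embed_vec (Suc d) (w + 0 \<cdot>\<^sub>v z) + (0 * 0) \<cdot>\<^sub>v unit_vec (Suc d) d"
      unfolding x by (rule eq_vecI) (use wc zc in auto)
    then show "x \<in> {embed_vec (Suc d) (w + b \<cdot>\<^sub>v z) + (b * 0) \<cdot>\<^sub>v unit_vec (Suc d) d | w b. w \<in> W}"
      using w by blast
  qed
  moreover have "inj_on (embed_vec (Suc d)) W"
    by (rule inj_onI, rule emb_inj) (use W in auto)
  ultimately show ?thesis by (simp add: card_image)
qed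

lemma cnt_zero_out:
  fixes W :: "'a::{field,finite} vec set"
  assumes W: "W \<subseteq> carrier_vec d" and zc: "z \<in> carrier_vec d" and z: "z \<notin> W"
    and add: "\<And>x y. x \<in> W \<Longrightarrow> y \<in> W \<Longrightarrow> x + y \<in> W"
    and sm: "\<And>x b. x \<in> W \<Longrightarrow> b \<cdot>\<^sub>v x \<in> W"
  shows "card {embed_vec (Suc d) (w + b \<cdot>\<^sub>v z) + (b * 0) \<cdot>\<^sub>v unit_vec (Suc d) d | w b. w \<in> W}
    = card W * card (UNIV :: 'a set)"
proof (rule cnt_inj[OF W zc], rule inj_onI, clarify)
  fix w b w' b' assume w: "w \<in> W" and w': "w' \<in> W"
    and eq: "embed_vec (Suc d) (w + b \<cdot>\<^sub>v z) + (b * 0) \<cdot>\<^sub>v unit_vec (Suc d) d =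
       embed_vec (Suc d) (w' + b' \<cdot>\<^sub>v z) + (b' * 0) \<cdot>\<^sub>v unit_vec (Suc d) d"
  have wc: "w \<in> carrier_vec d" "w' \<in> carrier_vec d" using w w' W by auto
  have "w + b \<cdot>\<^sub>v z = w' + b' \<cdot>\<^sub>v z \<and> b * 0 = b' * 0"
    by (rule emb_e_inj[OF _ _ eq]) (use wc zc in auto)
  then have e1: "w + b \<cdot>\<^sub>v z = w' + b' \<cdot>\<^sub>v z" by auto
  have comp: "w $ i + b * z $ i = w' $ i + b' * z $ i" if i: "i < d" for i
  proof -
    have "(w + b \<cdot>\<^sub>v z) $ i = (w' + b' \<cdot>\<^sub>v z) $ i" using e1 by (rule arg_cong)
    then show ?thesis using i wc zc by simp
  qed
  have bb: "b = b'"
  proof (rule ccontr)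
    assume ne: "b \<noteq> b'"
    let ?c = "inverse (b - b')"
    have "z = ?c \<cdot>\<^sub>v w' + (- ?c) \<cdot>\<^sub>v w"
    proof (rule eq_vecI)
      fix i assume "i < dim_vec (?c \<cdot>\<^sub>v w' + (- ?c) \<cdot>\<^sub>v w)"
      then have i: "i < d" using wc by simp
      have "z $ i = ?c * (w' $ i - w $ i)" using comp[OF i] ne
        by (simp add: field_simps)
      then show "z $ i = (?c \<cdot>\<^sub>v w' + (- ?c) \<cdot>\<^sub>v w) $ i" using i wc by (simp add: algebra_simps)
    qed (use wc zc in simp)
    moreover have "?c \<cdot>\<^sub>v w' + (- ?c) \<cdot>\<^sub>v w \<in> W" using add[OF sm[OF w'] sm[OF w]] .
    ultimately show False using z by simp
  qed
  have "w = w'"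
  proof (rule eq_vecI)
    fix i assume "i < dim_vec w'"
    then have i: "i < d" using wc by simp
    then show "w $ i = w' $ i" using comp[OF i] bb by simp
  qed (use wc in simp)
  then show "w = w' \<and> b = b'" using bb by simp
qed

lemma block_pow_E:
  fixes M A :: "'a::field mat"
  assumes M: "M \<in> carrier_mat (Suc d) (Suc d)" and A: "A \<in> carrier_mat d d"
    and hE: "\<And>u. u \<in> carrier_vec d \<Longrightarrow> M *\<^sub>v embed_vec (Suc d) u = embed_vec (Suc d) (A *\<^sub>v u)"
    and u: "u \<in> carrier_vec d"
  shows "(M ^\<^sub>m j) *\<^sub>v embed_vec (Suc d) u = embed_vec (Suc d) ((A ^\<^sub>m j) *\<^sub>v u)"
  using u
proof (induct j arbitrary: u)
  case 0
  then show ?case using M A by simp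
next
  case (Suc j)
  have Au: "A *\<^sub>v u \<in> carrier_vec d" using A Suc.prems by simp
  have "(M ^\<^sub>m Suc j) *\<^sub>v embed_vec (Suc d) u = (M ^\<^sub>m j) *\<^sub>v (M *\<^sub>v embed_vec (Suc d) u)"
    by (rule pow_vec_Suc[OF M emb_carrier])
  also have "\<dots> = (M ^\<^sub>m j) *\<^sub>v embed_vec (Suc d) (A *\<^sub>v u)" using hE[OF Suc.prems] by simp
  also have "\<dots> = embed_vec (Suc d) ((A ^\<^sub>m j) *\<^sub>v (A *\<^sub>v u))" by (rule Suc.hyps[OF Au])
  also have "(A ^\<^sub>m j) *\<^sub>v (A *\<^sub>v u) = (A ^\<^sub>m Suc j) *\<^sub>v u" by (rule pow_vec_Suc[OF A Suc.prems, symmetric])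
  finally show ?case .
qed

fun zs :: "nat \<Rightarrow> 'a::field mat \<Rightarrow> 'a vec \<Rightarrow> 'a \<Rightarrow> nat \<Rightarrow> 'a vec" where
  "zs d A z \<beta> 0 = 0\<^sub>v d"
| "zs d A z \<beta> (Suc j) = (A ^\<^sub>m j) *\<^sub>v z + \<beta> \<cdot>\<^sub>v zs d A z \<beta> j"

lemma zs_carrier: assumes A: "A \<in> carrier_mat d d" and z: "z \<in> carrier_vec d"
  shows "zs d A z \<beta> j \<in> carrier_vec d"
proof (induct j)
  case (Suc j)
  have "(A ^\<^sub>m j) *\<^sub>v z \<in> carrier_vec d" by (rule mult_mat_vec_carrier[OF pow_carrier_mat[OF A] z])
  then show ?case using Suc by simp
qed simp

lemma block_pow_e:
  fixes M A :: "'a::field mat"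
  assumes M: "M \<in> carrier_mat (Suc d) (Suc d)" and A: "A \<in> carrier_mat d d" and z: "z \<in> carrier_vec d"
    and hE: "\<And>u. u \<in> carrier_vec d \<Longrightarrow> M *\<^sub>v embed_vec (Suc d) u = embed_vec (Suc d) (A *\<^sub>v u)"
    and he: "M *\<^sub>v unit_vec (Suc d) d = embed_vec (Suc d) z + \<beta> \<cdot>\<^sub>v unit_vec (Suc d) d"
  shows "(M ^\<^sub>m j) *\<^sub>v unit_vec (Suc d) d = embed_vec (Suc d) (zs d A z \<beta> j) + (\<beta> ^ j) \<cdot>\<^sub>v unit_vec (Suc d) d"
proof (induct j)
  case 0
  show ?case using M by (intro eq_vecI) (auto simp: less_Suc_eq)
next
  case (Suc j)
  have Mj: "M ^\<^sub>m j \<in> carrier_mat (Suc d) (Suc d)" using M by simp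
  have zj: "zs d A z \<beta> j \<in> carrier_vec d" using zs_carrier[OF A z] .
  have Ajz: "(A ^\<^sub>m j) *\<^sub>v z \<in> carrier_vec d" by (rule mult_mat_vec_carrier[OF pow_carrier_mat[OF A] z])
  have "(M ^\<^sub>m Suc j) *\<^sub>v unit_vec (Suc d) d = (M ^\<^sub>m j) *\<^sub>v (M *\<^sub>v unit_vec (Suc d) d)"
    by (rule pow_vec_Suc[OF M]) simp
  also have "\<dots> = (M ^\<^sub>m j) *\<^sub>v (embed_vec (Suc d) z + \<beta> \<cdot>\<^sub>v unit_vec (Suc d) d)" using he by simp
  also have "\<dots> = (M ^\<^sub>m j) *\<^sub>v embed_vec (Suc d) z + (M ^\<^sub>m j) *\<^sub>v (\<beta> \<cdot>\<^sub>v unit_vec (Suc d) d)"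
    by (rule mult_add_distrib_mat_vec[OF Mj]) auto
  also have "(M ^\<^sub>m j) *\<^sub>v (\<beta> \<cdot>\<^sub>v unit_vec (Suc d) d) = \<beta> \<cdot>\<^sub>v ((M ^\<^sub>m j) *\<^sub>v unit_vec (Suc d) d)"
    by (rule mult_mat_vec[OF Mj]) simp
  also note Suc
  also have "(M ^\<^sub>m j) *\<^sub>v embed_vec (Suc d) z = embed_vec (Suc d) ((A ^\<^sub>m j) *\<^sub>v z)"
    by (rule block_pow_E[OF M A hE z])
  finally have eq: "(M ^\<^sub>m Suc j) *\<^sub>v unit_vec (Suc d) d = embed_vec (Suc d) ((A ^\<^sub>m j) *\<^sub>v z) +
     \<beta> \<cdot>\<^sub>v (embed_vec (Suc d) (zs d A z \<beta> j) + \<beta> ^ j \<cdot>\<^sub>v unit_vec (Suc d) d)" .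
  show ?case unfolding eq zs.simps
    by (rule eq_vecI) (use zj Ajz in \<open>auto simp: less_Suc_eq algebra_simps\<close>)
qed

lemma block_eq:
  fixes M1 M2 A :: "'a::field mat"
  assumes M1: "M1 \<in> carrier_mat (Suc d) (Suc d)" and M2: "M2 \<in> carrier_mat (Suc d) (Suc d)"
    and A: "A \<in> carrier_mat d d" and z: "z \<in> carrier_vec d"
    and hE1: "\<And>u. u \<in> carrier_vec d \<Longrightarrow> M1 *\<^sub>v embed_vec (Suc d) u = embed_vec (Suc d) (A *\<^sub>v u)"
    and he1: "M1 *\<^sub>v unit_vec (Suc d) d = embed_vec (Suc d) z + \<beta> \<cdot>\<^sub>v unit_vec (Suc d) d"
    and hE2: "\<And>u. u \<in> carrier_vec d \<Longrightarrow> M2 *\<^sub>v embed_vec (Suc d) u = embed_vec (Suc d) (A *\<^sub>v u)"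
    and he2: "M2 *\<^sub>v unit_vec (Suc d) d = embed_vec (Suc d) z + \<beta> \<cdot>\<^sub>v unit_vec (Suc d) d"
  shows "M1 = M2"
proof (rule mat_eq_vecI[OF M1 M2])
  fix v :: "'a vec" assume v: "v \<in> carrier_vec (Suc d)"
  let ?u = "vec d (\<lambda>i. v $ i)"
  have u: "?u \<in> carrier_vec d" by simp
  have "M1 *\<^sub>v v = M1 *\<^sub>v (embed_vec (Suc d) ?u + v $ d \<cdot>\<^sub>v unit_vec (Suc d) d)"
    by (subst decomp_vec[OF v]) (rule refl)
  also have "\<dots> = embed_vec (Suc d) (A *\<^sub>v ?u + v $ d \<cdot>\<^sub>v z) + (v $ d * \<beta>) \<cdot>\<^sub>v unit_vec (Suc d) d"
    by (rule block_mult[OF M1 A z hE1 he1 u])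
  also have "\<dots> = M2 *\<^sub>v (embed_vec (Suc d) ?u + v $ d \<cdot>\<^sub>v unit_vec (Suc d) d)"
    by (rule block_mult[OF M2 A z hE2 he2 u, symmetric])
  also have "\<dots> = M2 *\<^sub>v v" by (subst (2) decomp_vec[OF v]) (rule refl)
  finally show "M1 *\<^sub>v v = M2 *\<^sub>v v" .
qed

definition mk :: "nat \<Rightarrow> 'a::field mat \<Rightarrow> 'a vec \<Rightarrow> 'a \<Rightarrow> 'a mat" where
  "mk d T c a = mat (Suc d) (Suc d) (\<lambda>(i,j). if j < d then (if i < d then T $$ (i,j) else 0)
      else (if i < d then c $ i else a))"

lemma mk_carrier[simp]: "mk d T c a \<in> carrier_mat (Suc d) (Suc d)"
  unfolding mk_def by simp

lemma mk_dims[simp]: "dim_row (mk d T c a) = Suc d" "dim_col (mk d T c a) = Suc d"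
  unfolding mk_def by simp_all

lemma mk_index: "i < Suc d \<Longrightarrow> j < Suc d \<Longrightarrow> mk d T c a $$ (i,j) =
   (if j < d then (if i < d then T $$ (i,j) else 0) else (if i < d then c $ i else a))"
  unfolding mk_def by simp

lemma mk_e:
  assumes c: "c \<in> carrier_vec d"
  shows "mk d T c a *\<^sub>v unit_vec (Suc d) d = embed_vec (Suc d) c + a \<cdot>\<^sub>v unit_vec (Suc d) d"
proof (rule eq_vecI)
  fix i assume "i < dim_vec (embed_vec (Suc d) c + a \<cdot>\<^sub>v unit_vec (Suc d) d)"
  then have i: "i < Suc d" by simp
  have "(mk d T c a *\<^sub>v unit_vec (Suc d) d) $ i = mk d T c a $$ (i, d)"
    by (rule mat_unit_entry[OF mk_carrier i]) simp
  also have "\<dots> = (if i < d then c $ i else a)" using i by (simp add: mk_index)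
  finally show "(mk d T c a *\<^sub>v unit_vec (Suc d) d) $ i = (embed_vec (Suc d) c + a \<cdot>\<^sub>v unit_vec (Suc d) d) $ i"
    using i c by (auto simp: less_Suc_eq)
qed simp

lemma mk_E:
  assumes T: "T \<in> carrier_mat d d" and u: "u \<in> carrier_vec d"
  shows "mk d T c a *\<^sub>v embed_vec (Suc d) u = embed_vec (Suc d) (T *\<^sub>v u)"
proof (rule eq_vecI)
  fix i assume "i < dim_vec (embed_vec (Suc d) (T *\<^sub>v u))"
  then have i: "i < Suc d" by simp
  have "(mk d T c a *\<^sub>v embed_vec (Suc d) u) $ i = (\<Sum>j\<in>{0..<Suc d}. mk d T c a $$ (i,j) * embed_vec (Suc d) u $ j)"
    using i by (simp add: scalar_prod_def)
  also have "\<dots> = (\<Sum>j\<in>{0..<d}. mk d T c a $$ (i,j) * embed_vec (Suc d) u $ j)"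
    by (simp add: sum.atLeast0_lessThan_Suc)
  also have "\<dots> = (\<Sum>j\<in>{0..<d}. (if i < d then T $$ (i,j) else 0) * u $ j)"
    by (rule sum.cong) (use i in \<open>auto simp: mk_index\<close>)
  also have "\<dots> = (if i < d then (T *\<^sub>v u) $ i else 0)"
    using T u by (auto simp: scalar_prod_def)
  finally show "(mk d T c a *\<^sub>v embed_vec (Suc d) u) $ i = embed_vec (Suc d) (T *\<^sub>v u) $ i"
    using i by simp
qed simp

context
  fixes d :: nat and T :: "'a::{field,finite} mat" and k :: nat
  assumes T: "T \<in> carrier_mat d d" and k: "T ^\<^sub>m Suc k = T ^\<^sub>m k"
begin

lemma Tstab: "j \<ge> k \<Longrightarrow> T ^\<^sub>m j = T ^\<^sub>m k"
proof -
  have "T ^\<^sub>m (k + i) = T ^\<^sub>m k" for i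
  proof (induct i)
    case (Suc i)
    have "T ^\<^sub>m (k + Suc i) = T ^\<^sub>m (k + i) * T" by simp
    also have "\<dots> = T ^\<^sub>m k" using Suc k by simp
    finally show ?case .
  qed simp
  moreover assume "j \<ge> k"
  ultimately show ?thesis by (metis le_add_diff_inverse)
qed

lemma Pc: "T ^\<^sub>m k \<in> carrier_mat d d" using T by simp

lemma PP: "T ^\<^sub>m k * T ^\<^sub>m k = T ^\<^sub>m k"
  using pow_mat_add[OF T, of k k] Tstab[of "k + k"] by simp

lemma srkT: "srk d T = mrank d (T ^\<^sub>m k)"
proof (rule srk_eq[of k])
  fix j assume "j \<ge> k" then show "mrank d (T ^\<^sub>m j) = mrank d (T ^\<^sub>m k)" by (subst Tstab) auto
qed

lemma Tpow_vec_k: "j \<ge> k \<Longrightarrow> v \<in> carrier_vec d \<Longrightarrow> (T ^\<^sub>m j) *\<^sub>v v = (T ^\<^sub>m k) *\<^sub>v v"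
  by (subst Tstab) auto

lemma hE_mk: "u \<in> carrier_vec d \<Longrightarrow> mk d T c a *\<^sub>v embed_vec (Suc d) u = embed_vec (Suc d) (T *\<^sub>v u)"
  by (rule mk_E[OF T])

lemma powE_mk: assumes "j \<ge> k" "u \<in> carrier_vec d"
  shows "(mk d T c a ^\<^sub>m j) *\<^sub>v embed_vec (Suc d) u = embed_vec (Suc d) ((T ^\<^sub>m k) *\<^sub>v u)"
  using block_pow_E[OF mk_carrier T hE_mk assms(2), of c a j] Tstab[OF assms(1)] by simp

lemma card_colsp_T: "card (colsp T d) = card (UNIV :: 'a set) ^ mrank d T"
  by (rule card_colsp_rank[OF T])

lemma card_colsp_P: "card (colsp (T ^\<^sub>m k) d) = card (UNIV :: 'a set) ^ mrank d (T ^\<^sub>m k)"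
  by (rule card_colsp_rank[OF Pc])

lemma case0:
  assumes c: "c \<in> carrier_vec d"
  shows "semi_idempotent (Suc d) (mk d T c 0)"
    and "srk (Suc d) (mk d T c 0) = mrank d (T ^\<^sub>m k)"
    and "mrank (Suc d) (mk d T c 0) = (if c \<in> colsp T d then mrank d T else Suc (mrank d T))"
proof -
  let ?M = "mk d T c 0"
  let ?P = "T ^\<^sub>m k"
  have Pcc: "?P *\<^sub>v c \<in> carrier_vec d" using Pc c by simp
  have he: "?M *\<^sub>v unit_vec (Suc d) d = embed_vec (Suc d) c + 0 \<cdot>\<^sub>v unit_vec (Suc d) d"
    by (rule mk_e[OF c])
  have powe: "(?M ^\<^sub>m j) *\<^sub>v unit_vec (Suc d) d = embed_vec (Suc d) (?P *\<^sub>v c) + 0 \<cdot>\<^sub>v unit_vec (Suc d) d"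
    if j: "j \<ge> Suc k" for j
  proof -
    obtain i where ji: "j = Suc i" and ik: "i \<ge> k" using j by (cases j) auto
    have "(?M ^\<^sub>m j) *\<^sub>v unit_vec (Suc d) d = embed_vec (Suc d) (zs d T c 0 j) + (0 ^ j) \<cdot>\<^sub>v unit_vec (Suc d) d"
      by (rule block_pow_e[OF mk_carrier T c hE_mk he])
    also have "zs d T c 0 j = (T ^\<^sub>m i) *\<^sub>v c"
    proof -
      have "(T ^\<^sub>m i) *\<^sub>v c \<in> carrier_vec d" by (rule mult_mat_vec_carrier[OF pow_carrier_mat[OF T] c])
      then show ?thesis unfolding ji zs.simps
        by (intro eq_vecI) (use zs_carrier[OF T c, of 0 i] T in auto)
    qed
    also have "\<dots> = ?P *\<^sub>v c" using Tstab[OF ik] by simp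
    also have "(0::'a) ^ j = 0" using ji by simp
    finally show ?thesis .
  qed
  have powE: "(?M ^\<^sub>m j) *\<^sub>v embed_vec (Suc d) u = embed_vec (Suc d) (?P *\<^sub>v u)"
    if "j \<ge> Suc k" "u \<in> carrier_vec d" for j u
    using powE_mk[of j u c 0] that by simp
  have "?M ^\<^sub>m Suc (Suc k) = ?M ^\<^sub>m Suc k"
  proof (rule block_eq[OF pow_carrier_mat[OF mk_carrier] pow_carrier_mat[OF mk_carrier] Pc Pcc])
    show "(?M ^\<^sub>m Suc (Suc k)) *\<^sub>v embed_vec (Suc d) u = embed_vec (Suc d) (?P *\<^sub>v u)"
      if "u \<in> carrier_vec d" for u by (rule powE) (use that in auto)
    show "(?M ^\<^sub>m Suc k) *\<^sub>v embed_vec (Suc d) u = embed_vec (Suc d) (?P *\<^sub>v u)"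
      if "u \<in> carrier_vec d" for u by (rule powE) (use that in auto)
    show "(?M ^\<^sub>m Suc (Suc k)) *\<^sub>v unit_vec (Suc d) d = embed_vec (Suc d) (?P *\<^sub>v c) + 0 \<cdot>\<^sub>v unit_vec (Suc d) d"
      by (rule powe) auto
    show "(?M ^\<^sub>m Suc k) *\<^sub>v unit_vec (Suc d) d = embed_vec (Suc d) (?P *\<^sub>v c) + 0 \<cdot>\<^sub>v unit_vec (Suc d) d"
      by (rule powe) auto
  qed
  then show "semi_idempotent (Suc d) ?M" using semi_idem_iff[OF mk_carrier] by blast
  have "mrank (Suc d) (?M ^\<^sub>m j) = mrank d ?P" if j: "j \<ge> Suc k" for j
  proof (rule rank_from_card)
    show "?M ^\<^sub>m j \<in> carrier_mat (Suc d) (Suc d)" by simp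
    have "colsp (?M ^\<^sub>m j) (Suc d) = {embed_vec (Suc d) (w + b \<cdot>\<^sub>v (?P *\<^sub>v c)) + (b * 0) \<cdot>\<^sub>v unit_vec (Suc d) d | w b. w \<in> colsp ?P d}"
    proof (rule block_colsp[OF pow_carrier_mat[OF mk_carrier] Pc Pcc])
      show "(?M ^\<^sub>m j) *\<^sub>v embed_vec (Suc d) u = embed_vec (Suc d) (?P *\<^sub>v u)"
        if "u \<in> carrier_vec d" for u by (rule powE) (use that j in auto)
      show "(?M ^\<^sub>m j) *\<^sub>v unit_vec (Suc d) d = embed_vec (Suc d) (?P *\<^sub>v c) + 0 \<cdot>\<^sub>v unit_vec (Suc d) d"
        by (rule powe[OF j])
    qed
    also have "card \<dots> = card (colsp ?P d)"
    proof (rule cnt_zero_in)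
      show "colsp ?P d \<subseteq> carrier_vec d" by (rule colsp_carrier[OF Pc])
      show "?P *\<^sub>v c \<in> colsp ?P d" unfolding colsp_def using c by blast
    qed (auto intro: colsp_add[OF Pc] colsp_smult[OF Pc])
    finally show "card (colsp (?M ^\<^sub>m j) (Suc d)) = card (UNIV :: 'a set) ^ mrank d ?P"
      using card_colsp_P by simp
  qed
  then show "srk (Suc d) ?M = mrank d ?P" by (intro srk_eq[of "Suc k"]) auto
  show "mrank (Suc d) ?M = (if c \<in> colsp T d then mrank d T else Suc (mrank d T))"
  proof (rule rank_from_card)
    show "?M \<in> carrier_mat (Suc d) (Suc d)" by simp
    have "colsp ?M (Suc d) = {embed_vec (Suc d) (w + b \<cdot>\<^sub>v c) + (b * 0) \<cdot>\<^sub>v unit_vec (Suc d) d | w b. w \<in> colsp T d}"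
      by (rule block_colsp[OF _ T c hE_mk he]) simp
    also have "card \<dots> = (if c \<in> colsp T d then card (colsp T d) else card (colsp T d) * card (UNIV :: 'a set))"
    proof (cases "c \<in> colsp T d")
      case True
      show ?thesis unfolding if_P[OF True]
        by (rule cnt_zero_in[OF colsp_carrier[OF T] True]) (auto intro: colsp_add[OF T] colsp_smult[OF T])
    next
      case False
      show ?thesis unfolding if_not_P[OF False]
        by (rule cnt_zero_out[OF colsp_carrier[OF T] c False]) (auto intro: colsp_add[OF T] colsp_smult[OF T])
    qed
    finally show "card (colsp ?M (Suc d)) = card (UNIV :: 'a set) ^ (if c \<in> colsp T d then mrank d T else Suc (mrank d T))"
      using card_colsp_T by simp
  qed
qed

lemma mat_zero_vec: "A \<in> carrier_mat m n \<Longrightarrow> A *\<^sub>v 0\<^sub>v n = (0\<^sub>v m :: 'a vec)"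
  by (intro eq_vecI) (auto simp: scalar_prod_def)

lemma case1:
  assumes c: "c \<in> carrier_vec d"
  shows "semi_idempotent (Suc d) (mk d T c 1) \<longleftrightarrow> (T ^\<^sub>m k) *\<^sub>v c = 0\<^sub>v d"
    and "(T ^\<^sub>m k) *\<^sub>v c = 0\<^sub>v d \<Longrightarrow> srk (Suc d) (mk d T c 1) = Suc (mrank d (T ^\<^sub>m k))"
    and "mrank (Suc d) (mk d T c 1) = Suc (mrank d T)"
proof -
  let ?M = "mk d T c 1"
  let ?P = "T ^\<^sub>m k"
  have he: "?M *\<^sub>v unit_vec (Suc d) d = embed_vec (Suc d) c + 1 \<cdot>\<^sub>v unit_vec (Suc d) d"
    by (rule mk_e[OF c])
  have powe: "(?M ^\<^sub>m j) *\<^sub>v unit_vec (Suc d) d = embed_vec (Suc d) (zs d T c 1 j) + 1 \<cdot>\<^sub>v unit_vec (Suc d) d" for j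
    using block_pow_e[OF mk_carrier T c hE_mk he, of j] by simp
  have zsc: "zs d T c 1 j \<in> carrier_vec d" for j by (rule zs_carrier[OF T c])
  have Tjc: "(T ^\<^sub>m j) *\<^sub>v c \<in> carrier_vec d" for j by (rule mult_mat_vec_carrier[OF pow_carrier_mat[OF T] c])
  show "semi_idempotent (Suc d) ?M \<longleftrightarrow> ?P *\<^sub>v c = 0\<^sub>v d"
  proof
    assume "semi_idempotent (Suc d) ?M"
    then obtain j where j: "?M ^\<^sub>m Suc j = ?M ^\<^sub>m j" using semi_idem_iff[OF mk_carrier] by blast
    have "(?M ^\<^sub>m Suc j) *\<^sub>v unit_vec (Suc d) d = (?M ^\<^sub>m j) *\<^sub>v unit_vec (Suc d) d"
      using j by (rule arg_cong)
    then have "embed_vec (Suc d) (zs d T c 1 (Suc j)) + 1 \<cdot>\<^sub>v unit_vec (Suc d) d =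
        embed_vec (Suc d) (zs d T c 1 j) + 1 \<cdot>\<^sub>v unit_vec (Suc d) d" unfolding powe .
    then have eqz: "zs d T c 1 (Suc j) = zs d T c 1 j" using emb_e_inj[OF zsc zsc] by blast
    have Tj0: "(T ^\<^sub>m j) *\<^sub>v c = 0\<^sub>v d"
    proof (rule eq_vecI)
      fix i assume "i < dim_vec (0\<^sub>v d :: 'a vec)"
      then have i: "i < d" by simp
      have "zs d T c 1 (Suc j) $ i = zs d T c 1 j $ i" using eqz by (rule arg_cong)
      then show "((T ^\<^sub>m j) *\<^sub>v c) $ i = (0\<^sub>v d :: 'a vec) $ i"
        using i Tjc[of j] zsc[of j] by simp
    qed (use Tjc T in simp)
    have "?P *\<^sub>v c = (T ^\<^sub>m (k + j)) *\<^sub>v c" using Tstab[of "k + j"] by simp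
    also have "\<dots> = (?P * T ^\<^sub>m j) *\<^sub>v c" using pow_mat_add[OF T, of k j] by simp
    also have "\<dots> = ?P *\<^sub>v ((T ^\<^sub>m j) *\<^sub>v c)" by (rule assoc_mult_mat_vec[OF Pc pow_carrier_mat[OF T] c])
    also have "\<dots> = 0\<^sub>v d" unfolding Tj0 by (rule mat_zero_vec[OF Pc])
    finally show "?P *\<^sub>v c = 0\<^sub>v d" .
  next
    assume P0: "?P *\<^sub>v c = 0\<^sub>v d"
    have Ti0: "(T ^\<^sub>m i) *\<^sub>v c = 0\<^sub>v d" if "i \<ge> k" for i using Tstab[OF that] P0 by simp
    have zstab: "zs d T c 1 (k + i) = zs d T c 1 k" for i
    proof (induct i)
      case (Suc i)
      have "zs d T c 1 (k + Suc i) = (T ^\<^sub>m (k + i)) *\<^sub>v c + 1 \<cdot>\<^sub>v zs d T c 1 (k + i)" by simp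
      also have "\<dots> = 0\<^sub>v d + 1 \<cdot>\<^sub>v zs d T c 1 k" unfolding Suc Ti0[of "k + i", OF le_add1] ..
      also have "\<dots> = zs d T c 1 k" by (rule eq_vecI) (use zsc[of k] in auto)
      finally show ?case .
    qed simp
    have zstab': "zs d T c 1 j = zs d T c 1 k" if "j \<ge> k" for j
      using zstab[of "j - k"] that by simp
    show "semi_idempotent (Suc d) ?M"
    proof -
      have "?M ^\<^sub>m Suc k = ?M ^\<^sub>m k"
      proof (rule block_eq[OF pow_carrier_mat[OF mk_carrier] pow_carrier_mat[OF mk_carrier] Pc zsc[of k]])
        show "(?M ^\<^sub>m Suc k) *\<^sub>v embed_vec (Suc d) u = embed_vec (Suc d) (?P *\<^sub>v u)"
          if "u \<in> carrier_vec d" for u by (rule powE_mk) (use that in auto)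
        show "(?M ^\<^sub>m k) *\<^sub>v embed_vec (Suc d) u = embed_vec (Suc d) (?P *\<^sub>v u)"
          if "u \<in> carrier_vec d" for u by (rule powE_mk) (use that in auto)
        show "(?M ^\<^sub>m Suc k) *\<^sub>v unit_vec (Suc d) d = embed_vec (Suc d) (zs d T c 1 k) + 1 \<cdot>\<^sub>v unit_vec (Suc d) d"
          unfolding powe zstab'[of "Suc k", OF le_SucI[OF order_refl]] ..
        show "(?M ^\<^sub>m k) *\<^sub>v unit_vec (Suc d) d = embed_vec (Suc d) (zs d T c 1 k) + 1 \<cdot>\<^sub>v unit_vec (Suc d) d"
          unfolding powe ..
      qed
      then show ?thesis using semi_idem_iff[OF mk_carrier] by blast
    qed
  qed
  show "srk (Suc d) ?M = Suc (mrank d ?P)" if P0: "?P *\<^sub>v c = 0\<^sub>v d"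
  proof -
    have Ti0: "(T ^\<^sub>m i) *\<^sub>v c = 0\<^sub>v d" if "i \<ge> k" for i using Tstab[OF that] P0 by simp
    have zstab: "zs d T c 1 (k + i) = zs d T c 1 k" for i
    proof (induct i)
      case (Suc i)
      have "zs d T c 1 (k + Suc i) = (T ^\<^sub>m (k + i)) *\<^sub>v c + 1 \<cdot>\<^sub>v zs d T c 1 (k + i)" by simp
      also have "\<dots> = 0\<^sub>v d + 1 \<cdot>\<^sub>v zs d T c 1 k" unfolding Suc Ti0[of "k + i", OF le_add1] ..
      also have "\<dots> = zs d T c 1 k" by (rule eq_vecI) (use zsc[of k] in auto)
      finally show ?case .
    qed simp
    have zstab': "zs d T c 1 j = zs d T c 1 k" if "j \<ge> k" for j
      using zstab[of "j - k"] that by simp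
    have "mrank (Suc d) (?M ^\<^sub>m j) = Suc (mrank d ?P)" if j: "j \<ge> k" for j
    proof (rule rank_from_card)
      show "?M ^\<^sub>m j \<in> carrier_mat (Suc d) (Suc d)" by simp
      have "colsp (?M ^\<^sub>m j) (Suc d) = {embed_vec (Suc d) (w + b \<cdot>\<^sub>v zs d T c 1 k) + (b * 1) \<cdot>\<^sub>v unit_vec (Suc d) d | w b. w \<in> colsp ?P d}"
      proof (rule block_colsp[OF pow_carrier_mat[OF mk_carrier] Pc zsc[of k]])
        show "(?M ^\<^sub>m j) *\<^sub>v embed_vec (Suc d) u = embed_vec (Suc d) (?P *\<^sub>v u)"
          if "u \<in> carrier_vec d" for u by (rule powE_mk) (use that j in auto)
        show "(?M ^\<^sub>m j) *\<^sub>v unit_vec (Suc d) d = embed_vec (Suc d) (zs d T c 1 k) + 1 \<cdot>\<^sub>v unit_vec (Suc d) d"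
          unfolding powe zstab'[OF j] ..
      qed
      also have "card \<dots> = card (colsp ?P d) * card (UNIV :: 'a set)"
        by (rule cnt_beta[OF colsp_carrier[OF Pc] zsc]) simp
      finally show "card (colsp (?M ^\<^sub>m j) (Suc d)) = card (UNIV :: 'a set) ^ Suc (mrank d ?P)"
        using card_colsp_P by simp
    qed
    then show ?thesis by (intro srk_eq[of k]) auto
  qed
  show "mrank (Suc d) ?M = Suc (mrank d T)"
  proof (rule rank_from_card)
    show "?M \<in> carrier_mat (Suc d) (Suc d)" by simp
    have "colsp ?M (Suc d) = {embed_vec (Suc d) (w + b \<cdot>\<^sub>v c) + (b * 1) \<cdot>\<^sub>v unit_vec (Suc d) d | w b. w \<in> colsp T d}"
      by (rule block_colsp[OF _ T c hE_mk he]) simp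
    also have "card \<dots> = card (colsp T d) * card (UNIV :: 'a set)"
      by (rule cnt_beta[OF colsp_carrier[OF T] c]) simp
    finally show "card (colsp ?M (Suc d)) = card (UNIV :: 'a set) ^ Suc (mrank d T)"
      using card_colsp_T by simp
  qed
qed

lemma case_other:
  assumes c: "c \<in> carrier_vec d" and a0: "a \<noteq> 0" and a1: "a \<noteq> 1"
  shows "\<not> semi_idempotent (Suc d) (mk d T c a)"
proof
  let ?M = "mk d T c a"
  assume "semi_idempotent (Suc d) ?M"
  then obtain j where j: "?M ^\<^sub>m Suc j = ?M ^\<^sub>m j" using semi_idem_iff[OF mk_carrier] by blast
  have he: "?M *\<^sub>v unit_vec (Suc d) d = embed_vec (Suc d) c + a \<cdot>\<^sub>v unit_vec (Suc d) d"
    by (rule mk_e[OF c])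
  have powe: "(?M ^\<^sub>m i) *\<^sub>v unit_vec (Suc d) d = embed_vec (Suc d) (zs d T c a i) + (a ^ i) \<cdot>\<^sub>v unit_vec (Suc d) d" for i
    by (rule block_pow_e[OF mk_carrier T c hE_mk he])
  have zsc: "zs d T c a i \<in> carrier_vec d" for i by (rule zs_carrier[OF T c])
  have "(?M ^\<^sub>m Suc j) *\<^sub>v unit_vec (Suc d) d = (?M ^\<^sub>m j) *\<^sub>v unit_vec (Suc d) d"
    using j by (rule arg_cong)
  then have "embed_vec (Suc d) (zs d T c a (Suc j)) + (a ^ Suc j) \<cdot>\<^sub>v unit_vec (Suc d) d =
      embed_vec (Suc d) (zs d T c a j) + (a ^ j) \<cdot>\<^sub>v unit_vec (Suc d) d" unfolding powe .
  then have "a ^ Suc j = a ^ j" using emb_e_inj[OF zsc zsc] by blast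
  then have "a ^ j * (a - 1) = 0" by (simp add: algebra_simps)
  then show False using a0 a1 by simp
qed

lemma card_Y:
  "card {c \<in> carrier_vec d. (T ^\<^sub>m k) *\<^sub>v c = 0\<^sub>v d} * card (UNIV :: 'a set) ^ mrank d (T ^\<^sub>m k)
    = card (UNIV :: 'a set) ^ d"
proof -
  let ?P = "T ^\<^sub>m k"
  let ?Y = "{c \<in> carrier_vec d. ?P *\<^sub>v c = 0\<^sub>v d}"
  let ?W = "colsp ?P d"
  have Wc: "?W \<subseteq> carrier_vec d" by (rule colsp_carrier[OF Pc])
  have PW: "?P *\<^sub>v w = w" if wW: "w \<in> ?W" for w
  proof -
    obtain u where u: "u \<in> carrier_vec d" "w = ?P *\<^sub>v u" using wW unfolding colsp_def by blast
    have "?P *\<^sub>v w = (?P * ?P) *\<^sub>v u" unfolding u(2) by (rule assoc_mult_mat_vec[OF Pc Pc u(1), symmetric])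
    then show ?thesis unfolding PP u(2) .
  qed
  have bij: "bij_betw (\<lambda>(w, y). w + y) (?W \<times> ?Y) (carrier_vec d)"
  proof (rule bij_betw_imageI)
    show "inj_on (\<lambda>(w, y). w + y) (?W \<times> ?Y)"
    proof (rule inj_onI, clarify)
      fix w y w' y' assume w: "w \<in> ?W" and w': "w' \<in> ?W" and y: "y \<in> carrier_vec d" "?P *\<^sub>v y = 0\<^sub>v d"
        and y': "y' \<in> carrier_vec d" "?P *\<^sub>v y' = 0\<^sub>v d" and eq: "w + y = w' + y'"
      have wc: "w \<in> carrier_vec d" "w' \<in> carrier_vec d" using w w' Wc by auto
      have "?P *\<^sub>v (w + y) = ?P *\<^sub>v (w' + y')" using eq by (rule arg_cong)
      then have "?P *\<^sub>v w + ?P *\<^sub>v y = ?P *\<^sub>v w' + ?P *\<^sub>v y'"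
        using mult_add_distrib_mat_vec[OF Pc wc(1) y(1)] mult_add_distrib_mat_vec[OF Pc wc(2) y'(1)] by simp
      then have "w + 0\<^sub>v d = w' + 0\<^sub>v d" unfolding PW[OF w] PW[OF w'] y(2) y'(2) .
      then have ww: "w = w'" using wc by simp
      have "y = y'"
      proof (rule eq_vecI)
        fix i assume "i < dim_vec y'" then have i: "i < d" using y' by simp
        have "(w + y) $ i = (w' + y') $ i" using eq by (rule arg_cong)
        then show "y $ i = y' $ i" using i wc y y' ww by simp
      qed (use y y' in simp)
      then show "w = w' \<and> y = y'" using ww by simp
    qed
    show "(\<lambda>(w, y). w + y) ` (?W \<times> ?Y) = carrier_vec d"
    proof (rule equalityI; rule subsetI)
      fix x assume "x \<in> (\<lambda>(w, y). w + y) ` (?W \<times> ?Y)"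
      then show "x \<in> carrier_vec d" using Wc by auto
    next
      fix v :: "'a vec" assume v: "v \<in> carrier_vec d"
      let ?x = "?P *\<^sub>v v" and ?y = "v - ?P *\<^sub>v v"
      have xc: "?x \<in> carrier_vec d" using Pc v by simp
      have xW: "?x \<in> ?W" unfolding colsp_def using v by blast
      have "?P *\<^sub>v ?y = ?P *\<^sub>v v - ?P *\<^sub>v ?x"
        by (rule mult_minus_distrib_mat_vec[OF Pc v]) (use Pc v in simp)
      also have "?P *\<^sub>v ?x = ?x" by (rule PW[OF xW])
      finally have "?P *\<^sub>v ?y = 0\<^sub>v d" using xc by simp
      then have yY: "?y \<in> ?Y" using v xc by simp
      have veq: "?x + ?y = v" by (rule eq_vecI) (use v xc T in auto)
      have "(\<lambda>(w, y). w + y) (?x, ?y) \<in> (\<lambda>(w, y). w + y) ` (?W \<times> ?Y)"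
        by (rule imageI) (use xW yY in simp)
      then show "v \<in> (\<lambda>(w, y). w + y) ` (?W \<times> ?Y)" unfolding prod.case veq .
    qed
  qed
  have "card (carrier_vec d :: 'a vec set) = card (?W \<times> ?Y)" using bij_betw_same_card[OF bij] by simp
  also have "\<dots> = card ?W * card ?Y" by (rule card_cartesian_product)
  finally show ?thesis using card_colsp_P card_carrier_vec'[where 'b='a, of d] by (simp add: mult.commute)
qed

lemma restricts_iff: "restricts_to (Suc d) S T \<longleftrightarrow>
   (\<forall>v\<in>carrier_vec d. S *\<^sub>v embed_vec (Suc d) v = embed_vec (Suc d) (T *\<^sub>v v))"
  unfolding restricts_to_def by simp

lemma R_eq: "{S \<in> carrier_mat (Suc d) (Suc d). restricts_to (Suc d) S T}
   = (\<lambda>(c, a). mk d T c a) ` (carrier_vec d \<times> UNIV)"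
proof (rule equalityI; rule subsetI)
  fix S assume "S \<in> {S \<in> carrier_mat (Suc d) (Suc d). restricts_to (Suc d) S T}"
  then have S: "S \<in> carrier_mat (Suc d) (Suc d)" and R: "\<And>v. v \<in> carrier_vec d \<Longrightarrow>
     S *\<^sub>v embed_vec (Suc d) v = embed_vec (Suc d) (T *\<^sub>v v)" unfolding restricts_iff by auto
  let ?c = "vec d (\<lambda>i. S $$ (i, d))"
  have "S = mk d T ?c (S $$ (d, d))"
  proof (rule eq_matI)
    fix i j assume "i < dim_row (mk d T ?c (S $$ (d, d)))" "j < dim_col (mk d T ?c (S $$ (d, d)))"
    then have i: "i < Suc d" and j: "j < Suc d" by auto
    show "S $$ (i, j) = mk d T ?c (S $$ (d, d)) $$ (i, j)"
    proof (cases "j < d")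
      case True
      have ue: "unit_vec (Suc d) j = embed_vec (Suc d) (unit_vec d j)"
        by (rule eq_vecI) (use True in auto)
      have "S $$ (i, j) = (S *\<^sub>v unit_vec (Suc d) j) $ i" by (rule mat_unit_entry[OF S i j, symmetric])
      also have "\<dots> = embed_vec (Suc d) (T *\<^sub>v unit_vec d j) $ i" unfolding ue R[OF unit_vec_carrier] ..
      also have "\<dots> = (if i < d then T $$ (i, j) else 0)"
        using i True T by (auto simp: mat_unit_entry)
      finally show ?thesis using i j True by (simp add: mk_index)
    next
      case False
      then have jd: "j = d" using j by simp
      show ?thesis using i unfolding jd by (auto simp: mk_index less_Suc_eq)
    qed
  qed (use S in auto)
  then show "S \<in> (\<lambda>(c, a). mk d T c a) ` (carrier_vec d \<times> UNIV)"
    by (intro image_eqI[of _ _ "(?c, S $$ (d, d))"]) auto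
next
  fix S assume "S \<in> (\<lambda>(c, a). mk d T c a) ` (carrier_vec d \<times> UNIV)"
  then obtain c a where S: "S = mk d T c a" by auto
  show "S \<in> {S \<in> carrier_mat (Suc d) (Suc d). restricts_to (Suc d) S T}"
    unfolding S restricts_iff using hE_mk by simp
qed

lemma mk_inj: "inj_on (\<lambda>(c, a). mk d T c a) (carrier_vec d \<times> UNIV)"
proof (rule inj_onI, clarify)
  fix c a c' a' assume c: "c \<in> carrier_vec d" and c': "c' \<in> carrier_vec d"
    and eq: "mk d T c a = mk d T c' a'"
  have "mk d T c a $$ (d, d) = mk d T c' a' $$ (d, d)" using eq by (rule arg_cong)
  then have aa: "a = a'" by (simp add: mk_index)
  have "c = c'"
  proof (rule eq_vecI)
    fix i assume "i < dim_vec c'" then have i: "i < d" using c' by simp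
    have "mk d T c a $$ (i, d) = mk d T c' a' $$ (i, d)" using eq by (rule arg_cong)
    then show "c $ i = c' $ i" using i by (simp add: mk_index)
  qed (use c c' in simp)
  then show "c = c' \<and> a = a'" using aa by simp
qed

end

lemma sum_if_const:
  assumes A: "finite A" and W: "W \<subseteq> A"
  shows "(\<Sum>c\<in>A. if c \<in> W then x else y) = of_nat (card W) * x + of_nat (card (A - W)) * (y :: int)"
proof -
  have "(\<Sum>c\<in>A. if c \<in> W then x else y) = (\<Sum>c\<in>A \<inter> {c. c \<in> W}. x) + (\<Sum>c\<in>A \<inter> - {c. c \<in> W}. y)"
    by (rule sum.If_cases[OF A])
  also have "A \<inter> {c. c \<in> W} = W" using W by auto
  also have "A \<inter> - {c. c \<in> W} = A - W" by auto
  finally show ?thesis by simp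
qed

lemma mu_Suc: "mu q (Suc s) = - (q ^ s) * mu q s"
proof -
  have "Suc s choose 2 = s + (s choose 2)"
    using binomial_Suc_Suc[of s 1] by (simp add: numeral_2_eq_2)
  then show ?thesis unfolding mu_def by (simp add: power_add algebra_simps)
qed

theorem proposition3p5:
  fixes T :: "'a::{field,finite} mat" and n r :: nat and f :: "nat \<Rightarrow> int"
  assumes "n \<ge> 1"
    and "T \<in> carrier_mat (n - 1) (n - 1)"
    and "semi_idempotent (n - 1) T"
    and "mrank (n - 1) T \<le> r"
  defines "q \<equiv> int (card (UNIV :: 'a set))"
  shows "(mrank (n - 1) T < r \<longrightarrow>
           E_sum q n r f T = mu q (srk (n - 1) T) * q ^ mrank (n - 1) T
              * (f (mrank (n - 1) T) - f (mrank (n - 1) T + 1)))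
       \<and> (mrank (n - 1) T = r \<longrightarrow>
           E_sum q n r f T = mu q (srk (n - 1) T) * q ^ mrank (n - 1) T * f (mrank (n - 1) T))"
proof -
  obtain d where n: "n = Suc d" using assms(1) by (cases n) auto
  have T: "T \<in> carrier_mat d d" using assms(2) n by simp
  obtain k where k: "T ^\<^sub>m Suc k = T ^\<^sub>m k" using assms(3) semi_idem_iff[OF T] n by auto
  define t where "t = mrank d T"
  define s where "s = mrank d (T ^\<^sub>m k)"
  define Q where "Q = card (UNIV :: 'a set)"
  define W where "W = colsp T d"
  define Y where "Y = {c \<in> carrier_vec d. (T ^\<^sub>m k) *\<^sub>v c = 0\<^sub>v d}"
  have qQ: "q = int Q" unfolding q_def Q_def ..
  have srkT': "srk d T = s" using srkT[OF T k] s_def by simp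
  have tr: "t \<le> r" using assms(4) n t_def by simp
  define g where "g S = (if semi_idempotent (Suc d) S \<and> mrank (Suc d) S \<le> r
      then mu q (srk (Suc d) S) * f (mrank (Suc d) S) else 0)" for S :: "'a mat"
  let ?R = "{S \<in> carrier_mat (Suc d) (Suc d). restricts_to (Suc d) S T}"
  let ?h = "\<lambda>(c, a). mk d T c a"
  have finCV: "finite ((carrier_vec d :: 'a vec set) \<times> (UNIV :: 'a set))" by (rule finite_cartesian_product) simp_all
  have finR: "finite ?R" unfolding R_eq[OF T k] using finCV by (rule finite_imageI)
  have "E_sum q n r f T = (\<Sum>S\<in>{S \<in> ?R. semi_idempotent (Suc d) S \<and> mrank (Suc d) S \<le> r}.
       mu q (srk (Suc d) S) * f (mrank (Suc d) S))"
    unfolding E_sum_def n by (rule sum.cong) auto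
  also have "\<dots> = sum g ?R" unfolding g_def by (rule sum.inter_filter[OF finR])
  also have "\<dots> = sum g (?h ` (carrier_vec d \<times> UNIV))" unfolding R_eq[OF T k] ..
  also have "\<dots> = sum (g \<circ> ?h) (carrier_vec d \<times> UNIV)" by (rule sum.reindex[OF mk_inj[OF T k]])
  also have "\<dots> = (\<Sum>(c, a)\<in>carrier_vec d \<times> UNIV. g (mk d T c a))"
    by (rule sum.cong) auto
  also have "\<dots> = (\<Sum>c\<in>carrier_vec d. \<Sum>a\<in>UNIV. g (mk d T c a))"
    by (rule sum.cartesian_product[symmetric])
  also have "\<dots> = (\<Sum>c\<in>carrier_vec d. g (mk d T c 0) + g (mk d T c 1))"
  proof (rule sum.cong[OF refl])
    fix c :: "'a vec" assume c: "c \<in> carrier_vec d"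
    have "(\<Sum>a\<in>UNIV. g (mk d T c a)) = (\<Sum>a\<in>{0,1}. g (mk d T c a))"
      by (rule sum.mono_neutral_right) (auto simp: g_def case_other[OF T k c])
    also have "\<dots> = g (mk d T c 0) + g (mk d T c 1)" by simp
    finally show "(\<Sum>a\<in>UNIV. g (mk d T c a)) = g (mk d T c 0) + g (mk d T c 1)" .
  qed
  also have "\<dots> = (\<Sum>c\<in>carrier_vec d. g (mk d T c 0)) + (\<Sum>c\<in>carrier_vec d. g (mk d T c 1))"
    by (rule sum.distrib)
  also have "(\<Sum>c\<in>carrier_vec d. g (mk d T c 0)) = (\<Sum>c\<in>carrier_vec d. if c \<in> W then mu q s * f t
      else (if Suc t \<le> r then mu q s * f (Suc t) else 0))"
  proof (rule sum.cong[OF refl])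
    fix c :: "'a vec" assume c: "c \<in> carrier_vec d"
    show "g (mk d T c 0) = (if c \<in> W then mu q s * f t else (if Suc t \<le> r then mu q s * f (Suc t) else 0))"
      using case0[OF T k c] tr unfolding g_def W_def t_def s_def by auto
  qed
  also have "\<dots> = of_nat (card W) * (mu q s * f t) + of_nat (card (carrier_vec d - W)) * (if Suc t \<le> r then mu q s * f (Suc t) else 0)"
    by (rule sum_if_const) (auto simp: W_def colsp_carrier[OF T])
  also have "(\<Sum>c\<in>carrier_vec d. g (mk d T c 1)) = (\<Sum>c\<in>carrier_vec d. if c \<in> Y then
      (if Suc t \<le> r then mu q (Suc s) * f (Suc t) else 0) else 0)"
  proof (rule sum.cong[OF refl])
    fix c :: "'a vec" assume c: "c \<in> carrier_vec d"
    show "g (mk d T c 1) = (if c \<in> Y then (if Suc t \<le> r then mu q (Suc s) * f (Suc t) else 0) else 0)"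
      using case1[OF T k c] c unfolding g_def Y_def t_def s_def by auto
  qed
  also have "\<dots> = of_nat (card Y) * (if Suc t \<le> r then mu q (Suc s) * f (Suc t) else 0) + of_nat (card (carrier_vec d - Y)) * 0"
    by (rule sum_if_const) (auto simp: Y_def)
  finally have Esum: "E_sum q n r f T = int (card W) * (mu q s * f t)
     + int (card (carrier_vec d - W)) * (if Suc t \<le> r then mu q s * f (Suc t) else 0)
     + int (card Y) * (if Suc t \<le> r then mu q (Suc s) * f (Suc t) else 0)" by simp
  have cW: "int (card W) = q ^ t" unfolding W_def t_def qQ Q_def using card_colsp_T[OF T k] by simp
  have Wsub: "W \<subseteq> carrier_vec d" unfolding W_def by (rule colsp_carrier[OF T])
  have cCV: "card (carrier_vec d :: 'a vec set) = Q ^ d" unfolding Q_def by (rule card_carrier_vec')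
  have "card W \<le> card (carrier_vec d :: 'a vec set)" by (rule card_mono[OF _ Wsub]) simp
  then have cD: "int (card (carrier_vec d - W)) = q ^ d - q ^ t"
    using card_Diff_subset[OF finite_subset[OF Wsub] Wsub] cW cCV qQ by (simp add: of_nat_diff)
  have cY: "int (card Y) * q ^ s = q ^ d"
    using card_Y[OF T k] unfolding Y_def s_def qQ Q_def by (metis of_nat_mult of_nat_power)
  have key: "int (card Y) * (mu q (Suc s) * x) = - (q ^ d * mu q s * x)" for x
  proof -
    have "int (card Y) * (mu q (Suc s) * x) = - ((int (card Y) * q ^ s) * mu q s * x)"
      unfolding mu_Suc by (simp add: algebra_simps)
    then show ?thesis unfolding cY .
  qed
  have nd: "n - 1 = d" using n by simp
  show ?thesis
    unfolding nd srkT' t_def[symmetric]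
  proof (intro conjI impI)
    assume "t < r"
    then have "Suc t \<le> r" by simp
    then show "E_sum q n r f T = mu q s * q ^ t * (f t - f (t + 1))"
      unfolding Esum cW cD using key[of "f (Suc t)"] by (simp add: algebra_simps)
  next
    assume "t = r"
    then have "\<not> Suc t \<le> r" by simp
    then show "E_sum q n r f T = mu q s * q ^ t * f t"
      unfolding Esum cW cD by (simp add: algebra_simps)
  qed
qed

end
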